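(* Let $f_0(s)=\tfrac32 s^{2/3}$ and, for $t\in\mathbb C$ with $0<|t|<1$, let $f_t(s)=2^{-1/3}|t|^{2/3}\int_0^{\cosh^{-1}(s/|t|)}(\sinh 2\tau-2\tau)^{1/3}\,d\tau$ for $s\geq |t|$. Then: (1) for every $\delta\in(0,1)$ and every integer $k\geq 0$, the $k$-th derivatives $f_t^{(k)}(s)$ converge uniformly on $s\in[\delta,1]$ to $f_0^{(k)}(s)$ as $t\to 0$; (2) for every $0<\delta'<\delta<\tfrac14$ there is $\alpha_{\delta'}>0$ such that for $|t|<\alpha_{\delta'}$ and $s\in[\delta',\delta]$ one has $\tfrac12\leq f_t'(s)/f_0'(s)\leq 2$ and $\tfrac12\leq f_t''(s)/f_0''(s)\leq 2$. *)

theory Defs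
  imports "HOL-Analysis.Analysis"
begin

definition f0 :: "real \<Rightarrow> real" where
  "f0 s = 3/2 * s powr (2/3)"

text \<open>For complex t with 0 < |t| < 1 and s \<ge> |t|:
  f_t(s) = 2^(-1/3) |t|^(2/3) \<integral>_0^{arcosh(s/|t|)} (sinh 2\<tau> - 2\<tau>)^(1/3) d\<tau>.
  (Values for s < |t| are irrelevant junk.)\<close>
definition ft :: "complex \<Rightarrow> real \<Rightarrow> real" where
  "ft t s = 2 powr (-1/3) * cmod t powr (2/3) *
     integral {0..arcosh (s / cmod t)} (\<lambda>\<tau>. (sinh (2*\<tau>) - 2*\<tau>) powr (1/3))"

end

theory Submission
  imports Defs "HOL-Real_Asymp.Real_Asymp"
begin


definition Lop :: "(real \<Rightarrow> real) \<Rightarrow> real \<Rightarrow> real" where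
  "Lop g = (\<lambda>r. r * deriv g r)"

fun goodn :: "nat \<Rightarrow> (real \<Rightarrow> real) \<Rightarrow> bool" where
  "goodn 0 g \<longleftrightarrow> (\<forall>r\<in>{0<..<1/2}. g differentiable (at r)) \<and> (\<exists>l. (g \<longlongrightarrow> l) (at_right 0))"
| "goodn (Suc n) g \<longleftrightarrow> (\<forall>r\<in>{0<..<1/2}. g differentiable (at r)) \<and> (\<exists>l. (g \<longlongrightarrow> l) (at_right 0))
      \<and> goodn n (Lop g) \<and> (Lop g \<longlongrightarrow> 0) (at_right 0)"

lemma goodn_base: "goodn n g \<Longrightarrow> (\<forall>r\<in>{0<..<1/2}. g differentiable (at r)) \<and> (\<exists>l. (g \<longlongrightarrow> l) (at_right 0))"
  by (cases n) auto

lemma goodn_SucD: "goodn (Suc n) g \<Longrightarrow> goodn n g"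
proof (induction n arbitrary: g)
  case 0 then show ?case by simp
next
  case (Suc n) then show ?case by auto
qed

lemma goodn_mono: "goodn n g \<Longrightarrow> m \<le> n \<Longrightarrow> goodn m g"
proof (induction n arbitrary: m)
  case 0 then show ?case by simp
next
  case (Suc n)
  show ?case
  proof (cases "m = Suc n")
    case True then show ?thesis using Suc by simp
  next
    case False then show ?thesis using Suc goodn_SucD[of n g] by auto
  qed
qed

lemma ev_S: "r \<in> {0<..<(1/2::real)} \<Longrightarrow> eventually (\<lambda>x. x \<in> {0<..<1/2}) (nhds r)"
  by (rule eventually_nhds_in_open) auto

lemma ev_S_right: "eventually (\<lambda>x. x \<in> {0<..<(1/2::real)}) (at_right 0)"
  by (rule eventually_at_right_real) simp

lemma deriv_local:
  assumes "open U" "\<forall>x\<in>U. f x = g x" "r \<in> U"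
  shows "deriv f r = deriv g r"
  by (rule deriv_cong_ev) (use assms in \<open>auto simp: eventually_nhds intro!: exI[of _ U]\<close>)

lemma diff_local:
  fixes f g :: "real \<Rightarrow> real"
  assumes "open U" "\<forall>x\<in>U. f x = g x" "r \<in> U" "f differentiable (at r)"
  shows "g differentiable (at r)"
proof -
  from assms(4) obtain D where "(f has_real_derivative D) (at r)"
    using real_differentiable_def by blast
  moreover have "eventually (\<lambda>x. f x = g x) (nhds r)"
    using assms by (auto simp: eventually_nhds intro!: exI[of _ U])
  ultimately have "(g has_real_derivative D) (at r)"
    using DERIV_cong_ev[of r r f g D D] by blast
  then show ?thesis using real_differentiable_def by blast
qed

lemma lim_local:
  assumes "\<forall>x\<in>{0<..<(1/2::real)}. f x = g x" "(f \<longlongrightarrow> l) (at_right 0)"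
  shows "(g \<longlongrightarrow> l) (at_right 0)"
proof -
  have "eventually (\<lambda>x. f x = g x) (at_right 0)"
    using ev_S_right by eventually_elim (use assms in auto)
  then show ?thesis using assms(2) tendsto_cong by blast
qed

lemma goodn_transfer:
  assumes "\<forall>x\<in>{0<..<(1/2::real)}. f x = g x" "goodn n f"
  shows "goodn n g"
  using assms
proof (induction n arbitrary: f g)
  case 0
  then show ?case using diff_local[of "{0<..<1/2}" f g] lim_local[of f g] by auto
next
  case (Suc n)
  have L: "\<forall>x\<in>{0<..<(1/2::real)}. Lop f x = Lop g x"
    using deriv_local[of "{0<..<1/2}" f g] Suc.prems(1) by (auto simp: Lop_def)
  from Suc.prems(2) have "goodn n (Lop f)" by simp
  then have "goodn n (Lop g)" using Suc.IH L by blast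
  then show ?case using Suc.prems diff_local[of "{0<..<1/2}" f g] lim_local[of f g]
     lim_local[OF L] by auto
qed




lemma dvd_D: "(f::real\<Rightarrow>real) differentiable (at r) \<Longrightarrow> (f has_real_derivative deriv f r) (at r)"
  using DERIV_deriv_iff_real_differentiable by blast

lemma Lop_lin:
  assumes "f differentiable (at r)" "g differentiable (at r)"
  shows "Lop (\<lambda>x. \<alpha> * f x + \<beta> * g x) r = \<alpha> * Lop f r + \<beta> * Lop g r"
proof -
  have "((\<lambda>x. \<alpha> * f x + \<beta> * g x) has_real_derivative \<alpha> * deriv f r + \<beta> * deriv g r) (at r)"
    using dvd_D[OF assms(1)] dvd_D[OF assms(2)] by (auto intro!: derivative_eq_intros)
  then have "deriv (\<lambda>x. \<alpha> * f x + \<beta> * g x) r = \<alpha> * deriv f r + \<beta> * deriv g r" by (rule DERIV_imp_deriv)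
  then show ?thesis unfolding Lop_def by (simp add: algebra_simps)
qed

lemma diff_lin:
  assumes "(f::real\<Rightarrow>real) differentiable (at r)" "g differentiable (at r)"
  shows "(\<lambda>x. \<alpha> * f x + \<beta> * g x) differentiable (at r)"
  using assms by (auto intro!: derivative_intros)

lemma diff_mult:
  assumes "(f::real\<Rightarrow>real) differentiable (at r)" "g differentiable (at r)"
  shows "(\<lambda>x. f x * g x) differentiable (at r)"
  using assms by (auto intro!: derivative_intros)

lemma diff_powr:
  assumes "(z::real\<Rightarrow>real) differentiable (at r)" "z r > 0"
  shows "(\<lambda>x. z x powr p) differentiable (at r)"
  using DERIV_fun_powr[OF dvd_D[OF assms(1)] assms(2), of p] real_differentiable_def by blast

lemma diff_ln:
  assumes "(z::real\<Rightarrow>real) differentiable (at r)" "z r > 0"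
  shows "(\<lambda>x. ln (z x)) differentiable (at r)"
proof -
  have "((\<lambda>x. ln (z x)) has_real_derivative 1 / z r * deriv z r) (at r)"
    using dvd_D[OF assms(1)] assms(2) by (auto intro!: derivative_eq_intros)
  then show ?thesis using real_differentiable_def by blast
qed

lemma goodn_lin:
  assumes "goodn n f" "goodn n g"
  shows "goodn n (\<lambda>x. \<alpha> * f x + \<beta> * g x)"
  using assms
proof (induction n arbitrary: f g)
  case 0
  then obtain lf lg where "(f \<longlongrightarrow> lf) (at_right 0)" "(g \<longlongrightarrow> lg) (at_right 0)" by auto
  then have "((\<lambda>x. \<alpha> * f x + \<beta> * g x) \<longlongrightarrow> \<alpha> * lf + \<beta> * lg) (at_right 0)"
    by (auto intro!: tendsto_intros)
  then show ?case using 0 diff_lin by auto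
next
  case (Suc n)
  have L: "\<forall>x\<in>{0<..<(1/2::real)}. \<alpha> * Lop f x + \<beta> * Lop g x = Lop (\<lambda>x. \<alpha> * f x + \<beta> * g x) x"
    using Suc.prems Lop_lin by auto
  have g1: "goodn n (\<lambda>x. \<alpha> * Lop f x + \<beta> * Lop g x)" using Suc by auto
  have g2: "goodn n (Lop (\<lambda>x. \<alpha> * f x + \<beta> * g x))" by (rule goodn_transfer[OF L g1])
  have l1: "((\<lambda>x. \<alpha> * Lop f x + \<beta> * Lop g x) \<longlongrightarrow> \<alpha> * 0 + \<beta> * 0) (at_right 0)"
    using Suc.prems by (intro tendsto_intros) auto
  have l2: "(Lop (\<lambda>x. \<alpha> * f x + \<beta> * g x) \<longlongrightarrow> 0) (at_right 0)"
    using lim_local[OF L l1] by simp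
  obtain lf lg where "(f \<longlongrightarrow> lf) (at_right 0)" "(g \<longlongrightarrow> lg) (at_right 0)" using Suc.prems by auto
  then have "((\<lambda>x. \<alpha> * f x + \<beta> * g x) \<longlongrightarrow> \<alpha> * lf + \<beta> * lg) (at_right 0)"
    by (auto intro!: tendsto_intros)
  then show ?case using Suc.prems g2 l2 diff_lin by auto
qed

lemma goodn_cmult: "goodn n f \<Longrightarrow> goodn n (\<lambda>x. c * f x)"
  using goodn_transfer[OF _ goodn_lin[of n f f c 0]] by simp

lemma goodn_add: "goodn n f \<Longrightarrow> goodn n g \<Longrightarrow> goodn n (\<lambda>x. f x + g x)"
  using goodn_transfer[OF _ goodn_lin[of n f g 1 1]] by simp

lemma goodn_diff: "goodn n f \<Longrightarrow> goodn n g \<Longrightarrow> goodn n (\<lambda>x. f x - g x)"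
  using goodn_transfer[OF _ goodn_lin[of n f g 1 "-1"]] by simp

lemma Lop_mult:
  assumes "f differentiable (at r)" "g differentiable (at r)"
  shows "Lop (\<lambda>x. f x * g x) r = Lop f r * g r + f r * Lop g r"
proof -
  have "((\<lambda>x. f x * g x) has_real_derivative deriv f r * g r + f r * deriv g r) (at r)"
    using dvd_D[OF assms(1)] dvd_D[OF assms(2)] by (auto intro!: derivative_eq_intros)
  then have "deriv (\<lambda>x. f x * g x) r = deriv f r * g r + f r * deriv g r" by (rule DERIV_imp_deriv)
  then show ?thesis unfolding Lop_def by (simp add: algebra_simps)
qed

lemma goodn_mult:
  assumes "goodn n f" "goodn n g"
  shows "goodn n (\<lambda>x. f x * g x)"
  using assms
proof (induction n arbitrary: f g)
  case 0
  then obtain lf lg where "(f \<longlongrightarrow> lf) (at_right 0)" "(g \<longlongrightarrow> lg) (at_right 0)" by auto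
  then have "((\<lambda>x. f x * g x) \<longlongrightarrow> lf * lg) (at_right 0)"
    by (auto intro!: tendsto_intros)
  then show ?case using 0 diff_mult by auto
next
  case (Suc n)
  have L: "\<forall>x\<in>{0<..<(1/2::real)}. Lop f x * g x + f x * Lop g x = Lop (\<lambda>x. f x * g x) x"
    using Suc.prems Lop_mult by auto
  have a: "goodn n (\<lambda>x. Lop f x * g x)" using Suc goodn_SucD by auto
  have b: "goodn n (\<lambda>x. f x * Lop g x)" using Suc goodn_SucD by auto
  have g2: "goodn n (Lop (\<lambda>x. f x * g x))" by (rule goodn_transfer[OF L goodn_add[OF a b]])
  obtain lf lg where lf: "(f \<longlongrightarrow> lf) (at_right 0)" and lg: "(g \<longlongrightarrow> lg) (at_right 0)"
    using Suc.prems by auto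
  have l1: "((\<lambda>x. Lop f x * g x + f x * Lop g x) \<longlongrightarrow> 0 * lg + lf * 0) (at_right 0)"
    using Suc.prems lf lg by (intro tendsto_intros) auto
  have l2: "(Lop (\<lambda>x. f x * g x) \<longlongrightarrow> 0) (at_right 0)"
    using lim_local[OF L l1] by simp
  have "((\<lambda>x. f x * g x) \<longlongrightarrow> lf * lg) (at_right 0)"
    using lf lg by (auto intro!: tendsto_intros)
  then show ?case using Suc.prems g2 l2 diff_mult by auto
qed

lemma Lop_powr:
  assumes "z differentiable (at r)" "z r > 0"
  shows "Lop (\<lambda>x. z x powr p) r = p * (z r powr (p - 1) * Lop z r)"
proof -
  have "((\<lambda>x. z x powr p) has_real_derivative p * z r powr (p - of_nat 1) * deriv z r) (at r)"
    by (rule DERIV_fun_powr[OF dvd_D[OF assms(1)] assms(2)])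
  then have "deriv (\<lambda>x. z x powr p) r = p * z r powr (p - of_nat 1) * deriv z r" by (rule DERIV_imp_deriv)
  then show ?thesis unfolding Lop_def by (simp add: algebra_simps)
qed

lemma goodn_powr:
  assumes "goodn n z" "\<forall>x\<in>{0<..<(1/2::real)}. z x > 0" "(z \<longlongrightarrow> l) (at_right 0)" "l > 0"
  shows "goodn n (\<lambda>x. z x powr p)"
  using assms(1)
proof (induction n arbitrary: p)
  case 0
  have "((\<lambda>x. z x powr p) \<longlongrightarrow> l powr p) (at_right 0)"
    using assms(3,4) by (auto intro!: tendsto_intros)
  then show ?case using 0 assms(2) diff_powr by auto
next
  case (Suc n)
  have L: "\<forall>x\<in>{0<..<(1/2::real)}. p * (z x powr (p - 1) * Lop z x) = Lop (\<lambda>x. z x powr p) x"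
    using Suc.prems assms(2) Lop_powr by auto
  have a: "goodn n (\<lambda>x. z x powr (p-1))" using Suc goodn_SucD by auto
  have b: "goodn n (\<lambda>x. p * (z x powr (p - 1) * Lop z x))"
    using goodn_cmult[OF goodn_mult[OF a]] Suc.prems by auto
  have g2: "goodn n (Lop (\<lambda>x. z x powr p))" by (rule goodn_transfer[OF L b])
  have l1: "((\<lambda>x. p * (z x powr (p - 1) * Lop z x)) \<longlongrightarrow> p * (l powr (p-1) * 0)) (at_right 0)"
    using Suc.prems assms(3,4) by (intro tendsto_intros) auto
  have l2: "(Lop (\<lambda>x. z x powr p) \<longlongrightarrow> 0) (at_right 0)"
    using lim_local[OF L l1] by simp
  have "((\<lambda>x. z x powr p) \<longlongrightarrow> l powr p) (at_right 0)"
    using assms(3,4) by (auto intro!: tendsto_intros)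
  then show ?case using Suc.prems g2 l2 assms(2) diff_powr by auto
qed

lemma Lop_ln:
  assumes "z differentiable (at r)" "z r > 0"
  shows "Lop (\<lambda>x. ln (z x)) r = z r powr (-1) * Lop z r"
proof -
  have "((\<lambda>x. ln (z x)) has_real_derivative 1 / z r * deriv z r) (at r)"
    using dvd_D[OF assms(1)] assms(2) by (auto intro!: derivative_eq_intros)
  then have "deriv (\<lambda>x. ln (z x)) r = 1 / z r * deriv z r" by (rule DERIV_imp_deriv)
  then show ?thesis unfolding Lop_def using assms(2)
    by (simp add: powr_minus_divide)
qed

lemma goodn_ln:
  assumes "goodn n z" "\<forall>x\<in>{0<..<(1/2::real)}. z x > 0" "(z \<longlongrightarrow> l) (at_right 0)" "l > 0"
  shows "goodn n (\<lambda>x. ln (z x))"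
proof -
  have lim: "((\<lambda>x. ln (z x)) \<longlongrightarrow> ln l) (at_right 0)"
    using assms(3,4) by (auto intro!: tendsto_intros)
  have dz: "\<forall>r\<in>{0<..<(1/2::real)}. z differentiable (at r)" using goodn_base[OF assms(1)] by auto
  show ?thesis
  proof (cases n)
    case 0
    then show ?thesis using lim dz assms(2) diff_ln by auto
  next
    case (Suc m)
    have L: "\<forall>x\<in>{0<..<(1/2::real)}. z x powr (-1) * Lop z x = Lop (\<lambda>x. ln (z x)) x"
      using assms dz Lop_ln by auto
    have zm: "goodn m z" using assms(1) Suc goodn_SucD by auto
    have a: "goodn m (\<lambda>x. z x powr (-1))" by (rule goodn_powr[OF zm assms(2-4)])
    have g2: "goodn m (Lop (\<lambda>x. ln (z x)))"
      using goodn_transfer[OF L goodn_mult[OF a]] assms Suc by auto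
    have l1: "((\<lambda>x. z x powr (-1) * Lop z x) \<longlongrightarrow> l powr (-1) * 0) (at_right 0)"
      using assms Suc by (intro tendsto_intros) auto
    have l2: "(Lop (\<lambda>x. ln (z x)) \<longlongrightarrow> 0) (at_right 0)"
      using lim_local[OF L l1] by simp
    show ?thesis using Suc g2 l2 lim dz assms(2) diff_ln by auto
  qed
qed

lemma Lop_id: "Lop (\<lambda>x. x) = (\<lambda>x. x)"
  unfolding Lop_def by simp

lemma Lop_const: "Lop (\<lambda>x. c) = (\<lambda>x. 0)"
  unfolding Lop_def by simp

lemma goodn_const: "goodn n (\<lambda>x. c)"
  by (induction n arbitrary: c) (auto simp: Lop_const)

lemma goodn_id: "goodn n (\<lambda>x. x)"
proof (induction n)
  case 0
  have "((\<lambda>x::real. x) \<longlongrightarrow> 0) (at_right 0)" by (intro tendsto_intros)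
  then show ?case by auto
next
  case (Suc n)
  have "((\<lambda>x::real. x) \<longlongrightarrow> 0) (at_right 0)" by (intro tendsto_intros)
  then show ?case using Suc by (auto simp: Lop_id)
qed

lemma goodn_ode:
  assumes "goodn n h" "\<forall>r\<in>{0<..<(1/2::real)}. g differentiable (at r)"
    "(g \<longlongrightarrow> l) (at_right 0)" "(h \<longlongrightarrow> lh) (at_right 0)" "\<alpha> * l + lh = 0"
    "\<forall>r\<in>{0<..<(1/2::real)}. Lop g r = \<alpha> * g r + h r"
  shows "goodn n g"
  using assms(1)
proof (induction n)
  case 0
  then show ?case using assms by auto
next
  case (Suc n)
  have L: "\<forall>x\<in>{0<..<(1/2::real)}. \<alpha> * g x + 1 * h x = Lop g x" using assms(6) by auto
  have gn: "goodn n g" using Suc goodn_SucD by auto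
  have g2: "goodn n (Lop g)"
    using goodn_transfer[OF L goodn_lin[OF gn goodn_SucD[OF Suc.prems]]] .
  have l1: "((\<lambda>x. \<alpha> * g x + 1 * h x) \<longlongrightarrow> \<alpha> * l + 1 * lh) (at_right 0)"
    using assms by (intro tendsto_intros) auto
  have l2: "(Lop g \<longlongrightarrow> 0) (at_right 0)"
    using lim_local[OF L l1] assms(5) by simp
  show ?case using assms g2 l2 by auto
qed




definition phi :: "real \<Rightarrow> real" where
  "phi \<tau> = (sinh (2*\<tau>) - 2*\<tau>) powr (1/3)"

definition Gf :: "real \<Rightarrow> real" where
  "Gf r = 2 powr (-1/3) * integral {0..arcosh (1/r)} phi"

definition Psi :: "real \<Rightarrow> real" where
  "Psi r = r powr (2/3) * Gf r"

definition Phi :: "real \<Rightarrow> real" where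
  "Phi r = (sqrt (1 - r^2) - r^2 * arcosh (1/r)) powr (1/3) / sqrt (1 - r^2)"

lemma cosh_gt1: "(y::real) > 0 \<Longrightarrow> cosh y > 1"
proof -
  assume y: "y > 0"
  have "sinh y > 0" using y by simp
  then have "cosh y ^ 2 > 1" using cosh_square_eq[of y] by (simp add: power2_eq_square)
  moreover have "cosh y \<ge> 1" by (rule cosh_real_ge_1)
  ultimately have "cosh y \<noteq> 1" by auto
  then show ?thesis using \<open>cosh y \<ge> 1\<close> by linarith
qed

lemma sinh_gt: "(x::real) > 0 \<Longrightarrow> x < sinh x"
proof -
  assume x: "x > 0"
  have "(\<lambda>y. sinh y - y) 0 < (\<lambda>y. sinh y - y) x"
  proof (rule DERIV_pos_imp_increasing_open[OF x])
    fix y :: real assume "0 < y" "y < x"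
    then show "\<exists>d. ((\<lambda>y. sinh y - y) has_real_derivative d) (at y) \<and> d > 0"
      using cosh_gt1 by (intro exI[of _ "cosh y - 1"]) (auto intro!: derivative_eq_intros)
  next
    show "continuous_on {0..x} (\<lambda>y. sinh y - y)" by (intro continuous_intros)
  qed
  then show ?thesis by simp
qed

lemma sinh_ge: "(x::real) \<ge> 0 \<Longrightarrow> x \<le> sinh x"
  using sinh_gt[of x] by (cases "x = 0") auto

lemma phi_cont: "continuous_on {0..b} phi"
  unfolding phi_def
  by (rule continuous_on_powr') (auto intro!: continuous_intros simp: sinh_ge)

lemma Ih_deriv:
  assumes "u > 0"
  shows "((\<lambda>u. integral {0..u} phi) has_real_derivative phi u) (at u)"
proof -
  have "((\<lambda>u. integral {0..u} phi) has_real_derivative phi u) (at u within {0..u+1})"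
    using integral_has_real_derivative[OF phi_cont, of u "u+1"] assms by auto
  moreover have "u \<in> interior {0..u+1}" using assms by simp
  ultimately show ?thesis using at_within_interior by metis
qed

lemma key_id:
  fixes r :: real
  assumes r: "0 < r" "r < 1"
  defines "q \<equiv> sqrt (1 - r^2)" and "T \<equiv> arcosh (1/r)"
  shows "sqrt ((1/r)^2 - 1) = q / r"
    and "sinh (2*T) - 2*T = 2 * (q - r^2 * T) / r^2"
    and "q - r^2 * T > 0"
    and "T > 0" and "q > 0"
    and "T = ln (1 + q) - ln r"
proof -
  have "(1/r)^2 - 1 = (1 - r^2) / r^2" using r by (simp add: field_simps)
  then show sq: "sqrt ((1/r)^2 - 1) = q / r" using r by (simp add: q_def real_sqrt_divide)
  have g1: "1/r > 1" using r by simp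
  have "1/r \<noteq> 1" using g1 by linarith
  then show T0: "T > 0" unfolding T_def using g1 arcosh_real_gt_1_iff[of "1/r"] by linarith
  have "sinh (2*T) = 2 * sinh T * cosh T" by (rule sinh_double)
  also have "\<dots> = 2 * (q/r) * (1/r)" unfolding T_def
    using g1 sq by (simp add: sinh_arcosh_real)
  finally show e: "sinh (2*T) - 2*T = 2 * (q - r^2 * T) / r^2" using r
    by (simp add: field_simps power2_eq_square)
  have "2*T < sinh (2*T)" using sinh_gt T0 by simp
  then have "0 < 2 * (q - r^2 * T) / r^2" using e by simp
  then show "q - r^2 * T > 0" using r by (simp add: zero_less_divide_iff)
  show "q > 0" unfolding q_def using r by (simp add: power_less_one_iff abs_less_iff)
  have "T = ln (1/r + q/r)" unfolding T_def using g1 sq arcosh_real_def[of "1/r"] by simp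
  also have "\<dots> = ln ((1 + q) / r)" by (simp add: add_divide_distrib)
  also have "\<dots> = ln (1 + q) - ln r" using r \<open>q > 0\<close>
    by (subst ln_div) auto
  finally show "T = ln (1 + q) - ln r" .
qed




lemma Gf_deriv:
  fixes r :: real
  assumes r: "0 < r" "r < 1"
  shows "(Gf has_real_derivative (- (r powr (-5/3)) * Phi r)) (at r)"
proof -
  define q where "q = sqrt (1 - r^2)"
  define T where "T = arcosh (1/r)"
  note k = key_id[OF r, folded q_def T_def]
  have g1: "1/r > 1" using r by simp
  have d1: "(arcosh has_real_derivative 1/sqrt((1/r)^2 - 1)) (at (1/r))"
    using arcosh_real_has_field_derivative[OF g1] by blast
  have d2: "((\<lambda>x. 1/x) has_real_derivative (- 1 / r^2)) (at r)"
    using r by (auto intro!: derivative_eq_intros simp: power2_eq_square)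
  have dT: "((\<lambda>x. arcosh (1/x)) has_real_derivative 1/sqrt((1/r)^2 - 1) * (- 1 / r^2)) (at r)"
    using DERIV_chain2[OF d1 d2] .
  have dI: "((\<lambda>x. integral {0..arcosh (1/x)} phi) has_real_derivative
      phi T * (1/sqrt((1/r)^2 - 1) * (- 1 / r^2))) (at r)"
    using DERIV_chain2[OF Ih_deriv[OF k(4)[unfolded T_def]] dT] unfolding T_def .
  have dG: "(Gf has_real_derivative 2 powr (-1/3) * (phi T * (1/sqrt((1/r)^2 - 1) * (- 1 / r^2)))) (at r)"
    unfolding Gf_def[abs_def] by (rule DERIV_cmult[OF dI])
  define E where "E = q - r^2 * T"
  have E0: "E > 0" using k(3) E_def by simp
  have "phi T = (2 * E / r^2) powr (1/3)" unfolding phi_def using k(2) E_def by simp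
  also have "\<dots> = 2 powr (1/3) * E powr (1/3) / (r^2) powr (1/3)"
    by (simp add: powr_mult powr_divide)
  also have "(r^2) powr (1/3) = r powr (2/3)"
    using r powr_powr[of r 2 "1/3"] powr_realpow[of r 2] by simp
  finally have phiT: "phi T = 2 powr (1/3) * E powr (1/3) / r powr (2/3)" .
  have c2: "2 powr (-1/3) * 2 powr (1/3) = (1::real)"
    using powr_add[of "2::real" "-1/3" "1/3"] by simp
  have r53: "r powr (5/3) = r powr (2/3) * r"
    using powr_add[of r "2/3" 1] r by simp
  have Phi_eq: "Phi r = E powr (1/3) / q" unfolding Phi_def E_def q_def T_def by simp
  have B0: "r powr (2/3) > 0" using r by simp
  have "2 powr (-1/3) * (phi T * (1/sqrt((1/r)^2 - 1) * (- 1 / r^2)))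
      = - ((2 powr (-1/3) * 2 powr (1/3)) * E powr (1/3) / (r powr (2/3) * r * q))"
    unfolding phiT k(1) using r k(5) B0 by (simp add: field_simps power2_eq_square)
  also have "\<dots> = - (r powr (-5/3)) * Phi r"
  proof -
    have m: "r powr (-5/3) = 1 / (r powr (2/3) * r)"
      using powr_minus_divide[of r "5/3"] r53 by simp
    show ?thesis unfolding c2 Phi_eq m by simp
  qed
  finally show ?thesis using dG by simp
qed

lemma Psi_deriv:
  fixes r :: real
  assumes r: "0 < r" "r < 1"
  shows "(Psi has_real_derivative (2/3) * r powr (2/3 - 1) * Gf r + r powr (2/3) * (- (r powr (-5/3)) * Phi r)) (at r)"
proof -
  have "((\<lambda>x. x powr (2/3)) has_real_derivative (2/3) * r powr (2/3 - 1)) (at r)"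
    using has_real_derivative_powr[of r "2/3"] r by simp
  from DERIV_mult[OF this Gf_deriv[OF r]] show ?thesis
    unfolding Psi_def[abs_def] by (simp add: algebra_simps)
qed

lemma Lop_Psi:
  fixes r :: real
  assumes r: "0 < r" "r < 1"
  shows "Psi differentiable (at r)" "Lop Psi r = (2/3) * Psi r - Phi r"
proof -
  show "Psi differentiable (at r)" using Psi_deriv[OF r] real_differentiable_def by blast
  have d: "deriv Psi r = (2/3) * r powr (2/3 - 1) * Gf r + r powr (2/3) * (- (r powr (-5/3)) * Phi r)"
    by (rule DERIV_imp_deriv[OF Psi_deriv[OF r]])
  have a: "r * r powr (2/3 - 1) = r powr (2/3)"
    using powr_add[of r 1 "2/3 - 1"] r by simp
  have b: "r * r powr (2/3) * r powr (-5/3) = 1"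
    using powr_add[of r 1 "2/3"] powr_add[of r "1 + 2/3" "-5/3"] r by simp
  have "Lop Psi r = (2/3) * (r * r powr (2/3 - 1)) * Gf r - (r * r powr (2/3) * r powr (-5/3)) * Phi r"
    unfolding Lop_def d by (simp add: algebra_simps)
  also have "\<dots> = (2/3) * Psi r - Phi r" unfolding a b Psi_def by simp
  finally show "Lop Psi r = (2/3) * Psi r - Phi r" .
qed

definition Qf :: "real \<Rightarrow> real" where "Qf r = 1 - r * r"
definition Qh :: "real \<Rightarrow> real" where "Qh r = Qf r powr (1/2)"
definition Lq :: "real \<Rightarrow> real" where "Lq r = ln (1 + Qh r)"
definition wfn :: "real \<Rightarrow> real" where "wfn r = r * r * ln r"
definition Pf :: "real \<Rightarrow> real" where "Pf r = Qh r - r * r * Lq r + wfn r"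
definition PhiG :: "real \<Rightarrow> real" where "PhiG r = Pf r powr (1/3) * Qf r powr (-1/2)"

lemma Pf_eq:
  fixes r :: real
  assumes r: "0 < r" "r < 1"
  shows "Pf r = sqrt (1 - r^2) - r^2 * arcosh (1/r)" "Pf r > 0" "Phi r = PhiG r"
proof -
  note k = key_id[OF r]
  have qh: "Qh r = sqrt (1 - r^2)" unfolding Qh_def Qf_def using r
    by (subst powr_half_sqrt) (auto simp: power2_eq_square mult_le_one)
  show P: "Pf r = sqrt (1 - r^2) - r^2 * arcosh (1/r)"
    unfolding Pf_def qh Lq_def wfn_def k(6) by (simp add: algebra_simps power2_eq_square)
  show "Pf r > 0" using P k(3) by simp
  have "Qf r powr (-1/2) = 1 / sqrt (1 - r^2)"
    using qh unfolding Qh_def by (simp add: powr_minus_divide)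
  then show "Phi r = PhiG r" unfolding Phi_def PhiG_def P by simp
qed




lemma wfn_lim: "(wfn \<longlongrightarrow> 0) (at_right 0)"
  unfolding wfn_def by real_asymp

lemma gpow_lim: "LIM x at_right (0::real). x powr (-2/3) :> at_top"
  by real_asymp

lemma S_lt1: "x \<in> {0<..<(1/2::real)} \<Longrightarrow> 0 < x \<and> x < 1" by auto

lemma Qf_good: "goodn n Qf"
proof -
  have "goodn n (\<lambda>x. 1 - x * x)" by (rule goodn_diff[OF goodn_const goodn_mult[OF goodn_id goodn_id]])
  then show ?thesis unfolding Qf_def[abs_def] .
qed

lemma Qf_pos: "\<forall>x\<in>{0<..<(1/2::real)}. Qf x > 0"
proof
  fix x :: real assume "x \<in> {0<..<1/2}"
  then have "x * x < 1 * 1" by (intro mult_strict_mono) auto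
  then show "Qf x > 0" unfolding Qf_def by simp
qed

lemma Qf_lim: "(Qf \<longlongrightarrow> 1) (at_right 0)"
proof -
  have "((\<lambda>x::real. 1 - x * x) \<longlongrightarrow> 1 - 0 * 0) (at_right 0)" by (intro tendsto_intros)
  then show ?thesis unfolding Qf_def[abs_def] by simp
qed

lemma Qh_good: "goodn n Qh"
  unfolding Qh_def[abs_def] by (rule goodn_powr[OF Qf_good Qf_pos Qf_lim]) simp

lemma Qh_pos: "\<forall>x\<in>{0<..<(1/2::real)}. Qh x > 0"
  unfolding Qh_def using Qf_pos by auto

lemma Qh_lim: "(Qh \<longlongrightarrow> 1) (at_right 0)"
proof -
  have "((\<lambda>x. Qf x powr (1/2)) \<longlongrightarrow> 1 powr (1/2)) (at_right 0)"
    by (intro tendsto_intros Qf_lim) simp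
  then show ?thesis unfolding Qh_def[abs_def] by simp
qed

lemma Lq_good: "goodn n Lq"
proof -
  have g: "goodn n (\<lambda>x. 1 + Qh x)" by (rule goodn_add[OF goodn_const Qh_good])
  have p: "\<forall>x\<in>{0<..<(1/2::real)}. 1 + Qh x > 0" using Qh_pos by auto
  have l: "((\<lambda>x. 1 + Qh x) \<longlongrightarrow> 1 + 1) (at_right 0)" by (intro tendsto_intros Qh_lim)
  show ?thesis unfolding Lq_def[abs_def] by (rule goodn_ln[OF g p l]) simp
qed

lemma Lq_lim: "(Lq \<longlongrightarrow> ln 2) (at_right 0)"
proof -
  have l: "((\<lambda>x. ln (1 + Qh x)) \<longlongrightarrow> ln (1 + 1)) (at_right 0)" by (intro tendsto_intros Qh_lim) simp
  then show ?thesis unfolding Lq_def[abs_def] by simp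
qed

lemma wfn_deriv: "r > 0 \<Longrightarrow> (wfn has_real_derivative (2 * r * ln r + r)) (at r)"
  unfolding wfn_def[abs_def] by (auto intro!: derivative_eq_intros simp: field_simps)

lemma wfn_good: "goodn n wfn"
proof -
  have a: "\<forall>r\<in>{0<..<(1/2::real)}. wfn differentiable (at r)"
  proof
    fix r :: real assume "r \<in> {0<..<1/2}"
    then show "wfn differentiable (at r)" using wfn_deriv[of r] real_differentiable_def by auto
  qed
  have b: "((\<lambda>x::real. x * x) \<longlongrightarrow> 0) (at_right 0)"
  proof -
    have "((\<lambda>x::real. x * x) \<longlongrightarrow> 0 * 0) (at_right 0)" by (intro tendsto_intros)
    then show ?thesis by simp
  qed
  have c: "\<forall>r\<in>{0<..<(1/2::real)}. Lop wfn r = 2 * wfn r + r * r"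
  proof
    fix r :: real assume r: "r \<in> {0<..<1/2}"
    have "deriv wfn r = 2 * r * ln r + r" using wfn_deriv r by (auto intro: DERIV_imp_deriv)
    then show "Lop wfn r = 2 * wfn r + r * r" unfolding Lop_def wfn_def by (simp add: algebra_simps)
  qed
  show ?thesis by (rule goodn_ode[OF goodn_mult[OF goodn_id goodn_id] a wfn_lim b _ c]) simp
qed

lemma Pf_good: "goodn n Pf"
proof -
  have "goodn n (\<lambda>x. Qh x - x * x * Lq x + wfn x)"
    by (rule goodn_add[OF goodn_diff[OF Qh_good goodn_mult[OF goodn_mult[OF goodn_id goodn_id] Lq_good]] wfn_good])
  then show ?thesis unfolding Pf_def[abs_def] .
qed

lemma Pf_lim: "(Pf \<longlongrightarrow> 1) (at_right 0)"
proof -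
  have "((\<lambda>x. Qh x - x * x * Lq x + wfn x) \<longlongrightarrow> 1 - 0 * 0 * ln 2 + 0) (at_right 0)"
    by (intro tendsto_intros Qh_lim Lq_lim wfn_lim)
  then show ?thesis unfolding Pf_def[abs_def] by simp
qed

lemma Pf_pos: "\<forall>x\<in>{0<..<(1/2::real)}. Pf x > 0"
  using Pf_eq(2) by auto

lemma PhiG_good: "goodn n PhiG"
  unfolding PhiG_def[abs_def]
  by (rule goodn_mult[OF goodn_powr[OF Pf_good Pf_pos Pf_lim] goodn_powr[OF Qf_good Qf_pos Qf_lim]]) simp_all

lemma PhiG_lim: "(PhiG \<longlongrightarrow> 1) (at_right 0)"
proof -
  have "((\<lambda>x. Pf x powr (1/3) * Qf x powr (-1/2)) \<longlongrightarrow> 1 powr (1/3) * 1 powr (-1/2)) (at_right 0)"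
    by (intro tendsto_intros Pf_lim Qf_lim) simp_all
  then show ?thesis unfolding PhiG_def[abs_def] by simp
qed

lemma Phi_PhiG: "\<forall>x\<in>{0<..<(1/2::real)}. PhiG x = Phi x"
  using Pf_eq(3) by auto

lemma Phi_lim: "(Phi \<longlongrightarrow> 1) (at_right 0)"
  by (rule lim_local[OF Phi_PhiG PhiG_lim])

lemma mPhi_good: "goodn n (\<lambda>x. - Phi x)"
proof -
  have "goodn n (\<lambda>x. (-1) * PhiG x)" by (rule goodn_cmult[OF PhiG_good])
  then show ?thesis by (rule goodn_transfer[rotated]) (use Phi_PhiG in auto)
qed

lemma m53: "(-2/3 - 1::real) = -5/3" by simp

lemma mpowr: "x > 0 \<Longrightarrow> (x::real) powr (-a) = 1 / x powr a"
  by (rule powr_minus_divide)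

lemma ev1: "eventually (\<lambda>x. x \<in> {0<..<(1::real)}) (at_right 0)"
  by (rule eventually_at_right_real) simp

lemma PL1: "\<forall>\<^sub>F x in at_right (0::real). (-2/3::real) * x powr (-5/3) \<noteq> 0"
proof (rule eventually_mono[OF ev1])
  fix x :: real assume x: "x \<in> {0<..<1}"
  then have "x powr (-5/3) > 0" by (auto simp: powr_gt_zero)
  then show "(-2/3::real) * x powr (-5/3) \<noteq> 0" by linarith
qed

lemma PL2: "\<forall>\<^sub>F x in at_right 0. (Gf has_real_derivative - (x powr (-5/3)) * Phi x) (at x)"
proof (rule eventually_mono[OF ev1])
  fix x :: real assume x: "x \<in> {0<..<1}"
  then show "(Gf has_real_derivative - (x powr (-5/3)) * Phi x) (at x)"
    using Gf_deriv[of x] by auto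
qed

lemma PL3: "\<forall>\<^sub>F x in at_right (0::real). ((\<lambda>x. x powr (-2/3)) has_real_derivative (-2/3::real) * x powr (-5/3)) (at x)"
proof (rule eventually_mono[OF ev1])
  fix x :: real assume x: "x \<in> {0<..<1}"
  then have "((\<lambda>x. x powr (-2/3)) has_real_derivative (-2/3::real) * x powr (-2/3 - 1)) (at x)"
    by (intro has_real_derivative_powr) auto
  then show "((\<lambda>x. x powr (-2/3)) has_real_derivative (-2/3::real) * x powr (-5/3)) (at x)"
    unfolding m53 .
qed

lemma PL4: "\<forall>\<^sub>F x in at_right (0::real). (3/2) * Phi x = - (x powr (-5/3)) * Phi x / ((-2/3) * x powr (-5/3))"
proof (rule eventually_mono[OF ev1])
  fix x :: real assume x: "x \<in> {0<..<1}"
  then have "x powr (-5/3) > 0" by (auto simp: powr_gt_zero)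
  then show "(3/2) * Phi x = - (x powr (-5/3)) * Phi x / ((-2/3) * x powr (-5/3))"
    by (simp add: field_simps)
qed

lemma PL5: "((\<lambda>x. - (x powr (-5/3)) * Phi x / ((-2/3) * x powr (-5/3))) \<longlongrightarrow> 3/2) (at_right 0)"
proof -
  have "((\<lambda>x. (3/2) * Phi x) \<longlongrightarrow> (3/2) * 1) (at_right 0)" by (intro tendsto_intros Phi_lim)
  then have "((\<lambda>x. (3/2) * Phi x) \<longlongrightarrow> 3/2) (at_right 0)" by simp
  then show ?thesis using tendsto_cong[OF PL4] by blast
qed

lemma PL6: "\<forall>\<^sub>F x in at_right 0. Gf x / x powr (-2/3) = Psi x"
proof (rule eventually_mono[OF ev1])
  fix x :: real assume x: "x \<in> {0<..<1}"
  have "x powr (-2/3) = 1 / x powr (2/3)" using mpowr[of x "2/3"] x by simp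
  then show "Gf x / x powr (-2/3) = Psi x" unfolding Psi_def by simp
qed

lemma Psi_lim: "(Psi \<longlongrightarrow> 3/2) (at_right 0)"
proof -
  have "((\<lambda>x. Gf x / x powr (-2/3)) \<longlongrightarrow> 3/2) (at_right 0)"
    by (rule lhopital_right_0_at_top[OF gpow_lim PL1 PL2 PL3 PL5])
  then show ?thesis using tendsto_cong[OF PL6] by blast
qed

lemma Psi_good: "goodn n Psi"
proof -
  have a: "\<forall>r\<in>{0<..<(1/2::real)}. Psi differentiable (at r)" using Lop_Psi(1) by auto
  have b: "((\<lambda>x. - Phi x) \<longlongrightarrow> - 1) (at_right 0)" by (intro tendsto_intros Phi_lim)
  have c: "\<forall>r\<in>{0<..<(1/2::real)}. Lop Psi r = 2/3 * Psi r + - Phi r" using Lop_Psi(2) by auto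
  show ?thesis by (rule goodn_ode[OF mPhi_good a Psi_lim b _ c]) simp
qed




primrec Psik :: "nat \<Rightarrow> real \<Rightarrow> real" where
  "Psik 0 = Psi"
| "Psik (Suc k) = (\<lambda>r. (2/3 - real k) * Psik k r - Lop (Psik k) r)"

primrec pc :: "nat \<Rightarrow> real" where
  "pc 0 = 1"
| "pc (Suc k) = (2/3 - real k) * pc k"

lemma Psik_good: "goodn n (Psik k)"
proof (induction k arbitrary: n)
  case 0 then show ?case using Psi_good by simp
next
  case (Suc k)
  have g: "goodn n (Lop (Psik k))" using Suc[of "Suc n"] by simp
  have h: "goodn n (Psik k)" using goodn_SucD[OF Suc[of "Suc n"]] .
  have "goodn n (\<lambda>r. (2/3 - real k) * Psik k r - Lop (Psik k) r)"
    by (rule goodn_transfer[OF _ goodn_lin[OF h g, of "2/3 - real k" "-1"]]) simp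
  then show ?case unfolding Psik.simps .
qed

lemma Psik_lim: "(Psik k \<longlongrightarrow> (3/2) * pc k) (at_right 0)"
proof (induction k)
  case 0 then show ?case using Psi_lim by simp
next
  case (Suc k)
  have "(Lop (Psik k) \<longlongrightarrow> 0) (at_right 0)" using Psik_good[of "Suc 0" k] by simp
  then have X: "((\<lambda>r. (2/3 - real k) * Psik k r - Lop (Psik k) r) \<longlongrightarrow> (2/3 - real k) * ((3/2) * pc k) - 0) (at_right 0)"
    using Suc by (intro tendsto_intros)
  have eq: "(2/3 - real k) * ((3/2) * pc k) - 0 = (3/2) * pc (Suc k)" by simp
  show ?case unfolding Psik.simps using X[unfolded eq] .
qed

lemma derivs_local:
  assumes "open U" "\<forall>x\<in>U. f x = g x"
  shows "\<forall>x\<in>U. (deriv ^^ k) f x = (deriv ^^ k) g x"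
proof (induction k)
  case 0 then show ?case using assms by simp
next
  case (Suc k)
  then show ?case using deriv_local[OF assms(1) Suc] by simp
qed

lemma scaling:
  assumes a: "a > 0"
  shows "\<forall>s\<in>{2*a<..}. (deriv ^^ k) (\<lambda>s. s powr (2/3) * Psi (a/s)) s = s powr (2/3 - real k) * Psik k (a/s)"
proof (induction k)
  case 0 then show ?case by simp
next
  case (Suc k)
  show ?case
  proof
    fix s assume s: "s \<in> {2*a<..}"
    define e where "e = 2/3 - real k"
    define r where "r = a / s"
    have s0: "s > 0" using s a by simp
    have rS: "r \<in> {0<..<1/2}" using s a by (auto simp: r_def field_simps)
    have dP: "Psik k differentiable (at r)" using goodn_base[OF Psik_good[of 0 k]] rS by auto
    have d1: "((\<lambda>s. s powr e) has_real_derivative e * s powr (e - 1)) (at s)"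
      using has_real_derivative_powr[OF s0] .
    have d2: "((\<lambda>s. a / s) has_real_derivative - a / s^2) (at s)"
      using s0 by (auto intro!: derivative_eq_intros simp: power2_eq_square)
    have d3: "((\<lambda>s. Psik k (a/s)) has_real_derivative deriv (Psik k) r * (- a / s^2)) (at s)"
      using DERIV_chain2[OF dvd_D[OF dP, unfolded r_def] d2] unfolding r_def by simp
    have d4: "((\<lambda>s. s powr e * Psik k (a/s)) has_real_derivative
        e * s powr (e - 1) * Psik k (a/s) + deriv (Psik k) r * (- a / s^2) * s powr e) (at s)"
      by (rule DERIV_mult[OF d1 d3])
    have pe: "s powr e = s powr (e - 1) * s" using powr_add[of s "e-1" 1] s0 by simp
    have val: "e * s powr (e - 1) * Psik k (a/s) + deriv (Psik k) r * (- a / s^2) * s powr e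
        = s powr (e - 1) * (e * Psik k r - Lop (Psik k) r)"
      unfolding pe Lop_def r_def using s0 by (simp add: field_simps power2_eq_square)
    have "(deriv ^^ Suc k) (\<lambda>s. s powr (2/3) * Psi (a/s)) s
        = deriv ((deriv ^^ k) (\<lambda>s. s powr (2/3) * Psi (a/s))) s" by simp
    also have "\<dots> = deriv (\<lambda>s. s powr e * Psik k (a/s)) s"
      using deriv_local[OF _ Suc] s e_def by simp
    also have "\<dots> = s powr (e - 1) * (e * Psik k r - Lop (Psik k) r)"
      using DERIV_imp_deriv[OF d4] val by simp
    also have "\<dots> = s powr (2/3 - real (Suc k)) * Psik (Suc k) (a/s)"
      unfolding e_def r_def by (simp add: algebra_simps)
    finally show "(deriv ^^ Suc k) (\<lambda>s. s powr (2/3) * Psi (a/s)) s = s powr (2/3 - real (Suc k)) * Psik (Suc k) (a/s)" .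
  qed
qed

lemma f0_derivs:
  "\<forall>s\<in>{0<..}. (deriv ^^ k) f0 s = (3/2) * pc k * s powr (2/3 - real k)"
proof (induction k)
  case 0 then show ?case by (simp add: f0_def)
next
  case (Suc k)
  show ?case
  proof
    fix s :: real assume s: "s \<in> {0<..}"
    define e where "e = 2/3 - real k"
    have s0: "s > 0" using s by simp
    have d1: "((\<lambda>s. (3/2) * pc k * s powr e) has_real_derivative (3/2) * pc k * (e * s powr (e - 1))) (at s)"
      using DERIV_cmult[OF has_real_derivative_powr[OF s0]] .
    have "(deriv ^^ Suc k) f0 s = deriv ((deriv ^^ k) f0) s" by simp
    also have "\<dots> = deriv (\<lambda>s. (3/2) * pc k * s powr e) s"
      using deriv_local[OF _ Suc] s e_def by simp
    also have "\<dots> = (3/2) * pc k * (e * s powr (e - 1))"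
      using DERIV_imp_deriv[OF d1] by simp
    also have "\<dots> = (3/2) * pc (Suc k) * s powr (2/3 - real (Suc k))"
      unfolding e_def by (simp add: algebra_simps)
    finally show "(deriv ^^ Suc k) f0 s = (3/2) * pc (Suc k) * s powr (2/3 - real (Suc k))" .
  qed
qed

lemma ft_eq:
  assumes "cmod t > 0"
  shows "\<forall>s\<in>{0<..}. ft t s = s powr (2/3) * Psi (cmod t / s)"
proof
  fix s :: real assume s: "s \<in> {0<..}"
  define a where "a = cmod t"
  have a0: "a > 0" using assms a_def by simp
  have "s powr (2/3) * (a / s) powr (2/3) = a powr (2/3)"
    using s a0 by (simp add: powr_divide)
  moreover have "1 / (a / s) = s / a" by simp
  ultimately show "ft t s = s powr (2/3) * Psi (cmod t / s)"
    unfolding ft_def Psi_def Gf_def phi_def[abs_def] a_def[symmetric]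
    by (simp add: algebra_simps)
qed

lemma ft_derivs:
  assumes "cmod t > 0" "s > 2 * cmod t"
  shows "(deriv ^^ k) (ft t) s = s powr (2/3 - real k) * Psik k (cmod t / s)"
proof -
  have "(deriv ^^ k) (ft t) s = (deriv ^^ k) (\<lambda>s. s powr (2/3) * Psi (cmod t / s)) s"
  proof -
    have "s \<in> {0<..}" using assms by (simp del: norm_le_zero_iff zero_less_norm_iff)
    then show ?thesis using derivs_local[OF _ ft_eq[OF assms(1)], of k] by simp
  qed
  also have "\<dots> = s powr (2/3 - real k) * Psik k (cmod t / s)"
    using scaling[OF assms(1), of k] assms(2) by simp
  finally show ?thesis .
qed




lemma lim_eps:
  fixes f :: "real \<Rightarrow> real"
  assumes "(f \<longlongrightarrow> L) (at_right (0::real))" "e > 0"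
  obtains \<eta> where "\<eta> > 0" "\<And>r. 0 < r \<Longrightarrow> r < \<eta> \<Longrightarrow> \<bar>f r - L\<bar> < e"
proof -
  have "eventually (\<lambda>r. dist (f r) L < e) (at_right 0)"
    using assms tendsto_iff by blast
  then obtain b where "b > 0" "\<And>r. r > 0 \<Longrightarrow> r < b \<Longrightarrow> dist (f r) L < e"
    unfolding eventually_at_right_field by auto
  then show ?thesis using that by (auto simp: dist_real_def)
qed

lemma powr_bound:
  assumes "(0::real) < \<delta>" "\<delta> \<le> s" "s \<le> 1"
  shows "s powr c \<le> \<delta> powr c + 1"
proof (cases "c \<ge> 0")
  case True
  then have "s powr c \<le> 1 powr c" using assms by (intro powr_mono2) auto
  then have "s powr c \<le> 1" by simp
  then show ?thesis using powr_ge_zero[of \<delta> c] by linarith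
next
  case False
  then have "s powr c \<le> \<delta> powr c" using assms by (intro powr_mono2') auto
  then show ?thesis by simp
qed

lemma part1:
  assumes "0 < \<delta>" "\<delta> < 1"
  shows "uniform_limit {\<delta>..1} (\<lambda>t. (deriv ^^ k) (ft t)) ((deriv ^^ k) f0) (at (0::complex))"
  unfolding uniform_limit_iff
proof (intro allI impI)
  fix e :: real assume e: "e > 0"
  define B where "B = \<delta> powr (2/3 - real k) + 1"
  have B0: "B > 0" unfolding B_def by (simp add: add_nonneg_pos)
  define L where "L = (3/2) * pc k"
  obtain \<eta> where \<eta>: "\<eta> > 0" "\<And>r. 0 < r \<Longrightarrow> r < \<eta> \<Longrightarrow> \<bar>Psik k r - L\<bar> < e / B"
    using lim_eps[OF Psik_lim[of k, folded L_def], of "e / B"] e B0 by auto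
  define \<rho> where "\<rho> = min (\<delta>/2) (\<eta> * \<delta>)"
  have \<rho>0: "\<rho> > 0" unfolding \<rho>_def using assms \<eta> by simp
  show "\<forall>\<^sub>F t in at 0. \<forall>x\<in>{\<delta>..1}. dist ((deriv ^^ k) (ft t) x) ((deriv ^^ k) f0 x) < e"
    unfolding eventually_at
  proof (intro exI[of _ \<rho>] conjI ballI impI \<rho>0)
    fix t :: complex and s :: real
    assume t: "t \<in> UNIV" "t \<noteq> 0 \<and> dist t 0 < \<rho>" and s: "s \<in> {\<delta>..1}"
    define a where "a = cmod t"
    have a0: "a > 0" using t a_def by simp
    have a\<rho>: "a < \<rho>" using t a_def by simp
    have s0: "s > 0" using s assms by simp
    have s2a: "s > 2 * a" using a\<rho> s unfolding \<rho>_def by simp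
    have "a < \<eta> * s" using a\<rho> s \<eta>(1) unfolding \<rho>_def
      by (smt (verit) atLeastAtMost_iff mult_left_mono)
    then have r\<eta>: "a / s < \<eta>" using s0 by (simp add: divide_less_eq)
    have r0: "a / s > 0" using a0 s0 by simp
    have E1: "(deriv ^^ k) (ft t) s = s powr (2/3 - real k) * Psik k (a / s)"
      using ft_derivs[of t s k] a0 s2a a_def by simp
    have s0': "s \<in> {0<..}" using s0 by simp
    have E2: "(deriv ^^ k) f0 s = L * s powr (2/3 - real k)"
      using bspec[OF f0_derivs[of k] s0'] unfolding L_def .
    have pp: "s powr (2/3 - real k) > 0" using s0 by simp
    have "s powr (2/3 - real k) * Psik k (a / s) - L * s powr (2/3 - real k)
        = s powr (2/3 - real k) * (Psik k (a / s) - L)" by (simp add: algebra_simps)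
    then have "dist ((deriv ^^ k) (ft t) s) ((deriv ^^ k) f0 s) = s powr (2/3 - real k) * \<bar>Psik k (a/s) - L\<bar>"
      unfolding E1 E2 dist_real_def using pp by (simp add: abs_mult)
    also have "\<dots> \<le> B * \<bar>Psik k (a/s) - L\<bar>"
      using powr_bound[of \<delta> s "2/3 - real k"] assms s unfolding B_def
      by (intro mult_right_mono) auto
    also have "\<dots> < B * (e / B)" using mult_strict_left_mono[OF \<eta>(2)[OF r0 r\<eta>] B0] .
    also have "\<dots> = e" using B0 by simp
    finally show "dist ((deriv ^^ k) (ft t) s) ((deriv ^^ k) f0 s) < e" .
  qed
qed

lemma pc1: "(3/2) * pc 1 = 1" by simp
lemma pc2: "(3/2) * pc 2 = -1/3" by (simp add: numeral_2_eq_2)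

lemma part2:
  assumes "0 < \<delta>'" "\<delta>' < 1/4"
  shows "\<exists>\<alpha>>0. \<forall>\<delta>::real. \<delta>' < \<delta> \<and> \<delta> < 1/4 \<longrightarrow>
               (\<forall>t::complex. 0 < cmod t \<and> cmod t < \<alpha> \<longrightarrow>
                 (\<forall>s\<in>{\<delta>'..\<delta>}.
                    1/2 \<le> deriv (ft t) s / deriv f0 s \<and> deriv (ft t) s / deriv f0 s \<le> 2 \<and>
                    1/2 \<le> deriv (deriv (ft t)) s / deriv (deriv f0) s \<and>
                    deriv (deriv (ft t)) s / deriv (deriv f0) s \<le> 2))"
proof -
  obtain \<eta>1 where \<eta>1: "\<eta>1 > 0" "\<And>r. 0 < r \<Longrightarrow> r < \<eta>1 \<Longrightarrow> \<bar>Psik 1 r - 1\<bar> < 1/2"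
    using lim_eps[OF Psik_lim[of 1, unfolded pc1], of "1/2"] by auto
  obtain \<eta>2 where \<eta>2: "\<eta>2 > 0" "\<And>r. 0 < r \<Longrightarrow> r < \<eta>2 \<Longrightarrow> \<bar>Psik 2 r - (-1/3)\<bar> < 1/6"
    using lim_eps[OF Psik_lim[of 2, unfolded pc2], of "1/6"] by auto
  define \<alpha> where "\<alpha> = min (\<delta>'/2) (min \<eta>1 \<eta>2 * \<delta>')"
  have \<alpha>0: "\<alpha> > 0" unfolding \<alpha>_def using assms \<eta>1 \<eta>2 by simp
  show ?thesis
  proof (intro exI[of _ \<alpha>] conjI allI impI ballI \<alpha>0)
    fix \<delta> :: real and t :: complex and s :: real
    assume d: "\<delta>' < \<delta> \<and> \<delta> < 1/4" and t: "0 < cmod t \<and> cmod t < \<alpha>" and s: "s \<in> {\<delta>'..\<delta>}"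
    define a where "a = cmod t"
    have a0: "a > 0" using t a_def by simp
    have a\<alpha>: "a < \<alpha>" using t a_def by simp
    have s0: "s > 0" using s assms by simp
    have s2a: "s > 2 * a" using a\<alpha> s unfolding \<alpha>_def by simp
    have "a < min \<eta>1 \<eta>2 * s" using a\<alpha> s \<eta>1(1) \<eta>2(1) unfolding \<alpha>_def
      by (smt (verit) atLeastAtMost_iff mult_left_mono)
    moreover have "min \<eta>1 \<eta>2 * s \<le> \<eta>1 * s" using s0 by (intro mult_right_mono) auto
    moreover have "min \<eta>1 \<eta>2 * s \<le> \<eta>2 * s" using s0 by (intro mult_right_mono) auto
    ultimately have "a < \<eta>1 * s \<and> a < \<eta>2 * s" by linarith
    then have r\<eta>: "a / s < \<eta>1" "a / s < \<eta>2" using s0 by (auto simp: pos_divide_less_eq)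
    have r0: "a / s > 0" using a0 s0 by simp
    have p1: "\<bar>Psik 1 (a/s) - 1\<bar> < 1/2" using \<eta>1(2)[OF r0] r\<eta> by simp
    have p2: "\<bar>Psik 2 (a/s) - (-1/3)\<bar> < 1/6" using \<eta>2(2)[OF r0] r\<eta> by simp
    have ps1: "s powr (2/3 - real 1) > 0" using s0 by simp
    have ps2: "s powr (2/3 - real 2) > 0" using s0 by simp
    have D1: "deriv (ft t) s = s powr (2/3 - real 1) * Psik 1 (a / s)"
      using ft_derivs[of t s 1] a0 s2a a_def by simp
    have D2: "deriv (deriv (ft t)) s = s powr (2/3 - real 2) * Psik 2 (a / s)"
      using ft_derivs[of t s 2] a0 s2a a_def by (simp add: numeral_2_eq_2)
    have s0': "s \<in> {0<..}" using s0 by simp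
    have F1: "deriv f0 s = ((3/2) * pc 1) * s powr (2/3 - real 1)"
      using bspec[OF f0_derivs[of 1] s0'] by simp
    have F2: "deriv (deriv f0) s = ((3/2) * pc 2) * s powr (2/3 - real 2)"
      using bspec[OF f0_derivs[of 2] s0'] by (simp add: numeral_2_eq_2)
    have R1: "deriv (ft t) s / deriv f0 s = Psik 1 (a/s)"
      unfolding D1 F1 pc1 using ps1 by simp
    have R2: "deriv (deriv (ft t)) s / deriv (deriv f0) s = -3 * Psik 2 (a/s)"
      unfolding D2 F2 pc2 using ps2 by (simp add: field_simps)
    show "1/2 \<le> deriv (ft t) s / deriv f0 s" using R1 p1 by arith
    show "deriv (ft t) s / deriv f0 s \<le> 2" using R1 p1 by arith
    show "1/2 \<le> deriv (deriv (ft t)) s / deriv (deriv f0) s" using R2 p2 by arith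
    show "deriv (deriv (ft t)) s / deriv (deriv f0) s \<le> 2" using R2 p2 by arith
  qed
qed

theorem lemma3p2:
  shows "(\<forall>\<delta>::real. \<forall>k::nat. 0 < \<delta> \<and> \<delta> < 1 \<longrightarrow>
            uniform_limit {\<delta>..1} (\<lambda>t. (deriv ^^ k) (ft t)) ((deriv ^^ k) f0) (at (0::complex)))
       \<and> (\<forall>\<delta>'::real. 0 < \<delta>' \<and> \<delta>' < 1/4 \<longrightarrow>
            (\<exists>\<alpha>>0. \<forall>\<delta>::real. \<delta>' < \<delta> \<and> \<delta> < 1/4 \<longrightarrow>
               (\<forall>t::complex. 0 < cmod t \<and> cmod t < \<alpha> \<longrightarrow>
                 (\<forall>s\<in>{\<delta>'..\<delta>}.
                    1/2 \<le> deriv (ft t) s / deriv f0 s \<and> deriv (ft t) s / deriv f0 s \<le> 2 \<and>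
                    1/2 \<le> deriv (deriv (ft t)) s / deriv (deriv f0) s \<and>
                    deriv (deriv (ft t)) s / deriv (deriv f0) s \<le> 2))))"
  using part1 part2 by blast


end
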